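(* Let $n\geqslant 2$ and $\alpha\in\mathbf{I}\mathbb{N}_{\infty}^n$. Then there exist a unique element $\sigma_\alpha$ of the group of units $H(\mathbb{I})$ and unique idempotents $\varepsilon_{l(\alpha)},\varepsilon_{r(\alpha)}$ of $\mathbf{I}\mathbb{N}_{\infty}^n$ such that $\alpha=\sigma_\alpha\varepsilon_{l(\alpha)}=\varepsilon_{r(\alpha)}\sigma_\alpha$.
   Context: $\mathbb{N}=\{1,2,3,\ldots\}$, $n\geqslant 2$, and $\mathbb{N}^n$ carries the Euclidean metric $d$. A partial isometry of $\mathbb{N}^n$ is an injective partial map $\alpha\colon\mathbb{N}^n\rightharpoonup\mathbb{N}^n$ with $d((\mathbf{x})\alpha,(\mathbf{y})\alpha)=d(\mathbf{x},\mathbf{y})$ for all $\mathbf{x},\mathbf{y}\in\operatorname{dom}\alpha$; it is cofinite if $\mathbb{N}^n\setminus\operatorname{dom}\alpha$ and $\mathbb{N}^n\setminus\operatorname{ran}\alpha$ are finite. $\mathbf{I}\mathbb{N}_{\infty}^n$ is the monoid of all partial cofinite isometries of $\mathbb{N}^n$ under composition of partial maps written on the right: $\mathbf{x}(\alpha\beta)=(\mathbf{x}\alpha)\beta$ with $\operatorname{dom}(\alpha\beta)=\{\mathbf{x}\in\operatorname{dom}\alpha\colon \mathbf{x}\alpha\in\operatorname{dom}\beta\}$. Its identity is the identity map $\mathbb{I}$ of $\mathbb{N}^n$ and $H(\mathbb{I})$ is its group of units. *)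

theory Defs
  imports Complex_Main
begin

definition pts :: "nat \<Rightarrow> nat list set" where
  "pts n = {x. length x = n \<and> (\<forall>i\<in>set x. 1 \<le> i)}"

definition edist :: "nat list \<Rightarrow> nat list \<Rightarrow> real" where
  "edist x y = sqrt (\<Sum>i<length x. (real (x ! i) - real (y ! i))\<^sup>2)"

text \<open>Partial maps of N^n, composed on the right: x(\<alpha>\<beta>) = (x\<alpha>)\<beta>.\<close>
definition pcomp :: "(nat list \<rightharpoonup> nat list) \<Rightarrow> (nat list \<rightharpoonup> nat list) \<Rightarrow> (nat list \<rightharpoonup> nat list)"
  (infixl "\<cdot>" 70) where
  "\<alpha> \<cdot> \<beta> = \<beta> \<circ>\<^sub>m \<alpha>"

definition partial_isometry :: "nat \<Rightarrow> (nat list \<rightharpoonup> nat list) \<Rightarrow> bool" where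
  "partial_isometry n \<alpha> \<longleftrightarrow> dom \<alpha> \<subseteq> pts n \<and> ran \<alpha> \<subseteq> pts n \<and> inj_on \<alpha> (dom \<alpha>) \<and>
     (\<forall>x\<in>dom \<alpha>. \<forall>y\<in>dom \<alpha>. edist (the (\<alpha> x)) (the (\<alpha> y)) = edist x y)"

definition INinf :: "nat \<Rightarrow> (nat list \<rightharpoonup> nat list) set" where
  "INinf n = {\<alpha>. partial_isometry n \<alpha> \<and> finite (pts n - dom \<alpha>) \<and> finite (pts n - ran \<alpha>)}"

definition idN :: "nat \<Rightarrow> (nat list \<rightharpoonup> nat list)" where
  "idN n = (\<lambda>x. if x \<in> pts n then Some x else None)"

definition unitsN :: "nat \<Rightarrow> (nat list \<rightharpoonup> nat list) set" where
  "unitsN n = {\<sigma> \<in> INinf n. \<exists>\<tau>\<in>INinf n. \<sigma> \<cdot> \<tau> = idN n \<and> \<tau> \<cdot> \<sigma> = idN n}"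

definition idemN :: "nat \<Rightarrow> (nat list \<rightharpoonup> nat list) set" where
  "idemN n = {\<epsilon> \<in> INinf n. \<epsilon> \<cdot> \<epsilon> = \<epsilon>}"

end

theory Submission
  imports Defs
begin

definition sqd :: "nat list \<Rightarrow> nat list \<Rightarrow> real" where
  "sqd x y = (\<Sum>i<length x. (real (x ! i) - real (y ! i))\<^sup>2)"

lemma edist_sqd: "edist x y = sqrt (sqd x y)"
  by (simp add: edist_def sqd_def)

lemma sqd_nonneg: "sqd x y \<ge> 0"
  unfolding sqd_def by (intro sum_nonneg) auto

lemma edist_eq_iff: "edist a b = edist c d \<longleftrightarrow> sqd a b = sqd c d"
  by (simp add: edist_sqd)

lemma sqd_sym: "length x = length y \<Longrightarrow> sqd x y = sqd y x"
  unfolding sqd_def by (simp add: power2_commute)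

lemma sqd_self: "sqd x x = 0"
  unfolding sqd_def by simp

lemma sqd_shift:
  assumes "length y' = length x" "length y = length x" "j < length x"
    "\<forall>l<length x. l \<noteq> j \<longrightarrow> y' ! l = y ! l" "real (y' ! j) = real (y ! j) + s"
  shows "sqd x y' = sqd x y - 2 * s * (real (x ! j) - real (y ! j)) + s\<^sup>2"
proof -
  let ?A = "{..<length x}"
  have j: "j \<in> ?A" using assms(3) by simp
  have e1: "sqd x y' = (real (x!j) - real (y'!j))\<^sup>2 + (\<Sum>i\<in>?A-{j}. (real (x ! i) - real (y' ! i))\<^sup>2)"
    unfolding sqd_def using sum.remove[OF _ j] by simp
  have e2: "sqd x y = (real (x!j) - real (y!j))\<^sup>2 + (\<Sum>i\<in>?A-{j}. (real (x ! i) - real (y ! i))\<^sup>2)"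
    unfolding sqd_def using sum.remove[OF _ j] by simp
  have e3: "(\<Sum>i\<in>?A-{j}. (real (x ! i) - real (y' ! i))\<^sup>2) = (\<Sum>i\<in>?A-{j}. (real (x ! i) - real (y ! i))\<^sup>2)"
    using assms(4) by (intro sum.cong) auto
  show ?thesis using e1 e2 e3 assms(5) by (simp add: power2_eq_square algebra_simps)
qed

lemma sqd1:
  assumes "length u = n" "length w = n" "sqd u w = 1"
  shows "\<exists>j<n. \<exists>s::real. (s = 1 \<or> s = -1) \<and> real (u!j) = real (w!j) + s \<and> (\<forall>l<n. l \<noteq> j \<longrightarrow> u!l = w!l)"
proof -
  define d where "d l = int (u!l) - int (w!l)" for l
  have "real_of_int (\<Sum>l<n. (d l)\<^sup>2) = sqd u w"
    unfolding sqd_def d_def using assms(1) by simp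
  hence S: "(\<Sum>l<n. (d l)\<^sup>2) = 1" using assms(3) by linarith
  obtain j where j: "j < n" "d j \<noteq> 0"
  proof -
    have "\<not> (\<forall>l<n. d l = 0)"
    proof
      assume "\<forall>l<n. d l = 0"
      hence "(\<Sum>l<n. (d l)\<^sup>2) = 0" by (intro sum.neutral) auto
      thus False using S by simp
    qed
    thus ?thesis using that by auto
  qed
  have jA: "j \<in> {..<n}" using j by simp
  have S2: "(d j)\<^sup>2 + (\<Sum>l\<in>{..<n}-{j}. (d l)\<^sup>2) = 1" using S sum.remove[OF _ jA, of "\<lambda>l. (d l)\<^sup>2"] by simp
  have r0: "(\<Sum>l\<in>{..<n}-{j}. (d l)\<^sup>2) \<ge> 0" by (intro sum_nonneg) auto
  have "(d j)\<^sup>2 \<ge> 1" using j(2) by (simp add: power2_eq_square) (smt (verit) mult_le_0_iff zero_le_square mult_eq_0_iff)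
  hence dj: "(d j)\<^sup>2 = 1" and rest: "(\<Sum>l\<in>{..<n}-{j}. (d l)\<^sup>2) = 0" using S2 r0 by linarith+
  have "\<forall>l\<in>{..<n}-{j}. (d l)\<^sup>2 = 0"
    using rest by (subst (asm) sum_nonneg_eq_0_iff) auto
  hence oth: "\<forall>l<n. l \<noteq> j \<longrightarrow> u!l = w!l" unfolding d_def by auto
  have "d j = 1 \<or> d j = -1" using dj by (simp add: power2_eq_1_iff)
  hence "real (u!j) = real (w!j) + 1 \<or> real (u!j) = real (w!j) + (-1)" unfolding d_def by linarith
  thus ?thesis using j oth by blast
qed

definition Pm :: "nat \<Rightarrow> (nat \<Rightarrow> nat) \<Rightarrow> (nat list \<rightharpoonup> nat list)" where
  "Pm n a = (\<lambda>x. if x \<in> pts n then Some (map (\<lambda>j. x ! a j) [0..<n]) else None)"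

definition Rs :: "nat list set \<Rightarrow> (nat list \<rightharpoonup> nat list)" where
  "Rs A = (\<lambda>x. if x \<in> A then Some x else None)"

lemma pts_nth: "x \<in> pts n \<Longrightarrow> i < n \<Longrightarrow> 1 \<le> x ! i"
  unfolding pts_def by auto

lemma Pm_pts:
  assumes "\<forall>j<n. a j < n" "x \<in> pts n"
  shows "map (\<lambda>j. x ! a j) [0..<n] \<in> pts n"
  using assms unfolding pts_def by auto

lemma Pm_comp:
  assumes "\<forall>i<n. a i < n \<and> b i < n \<and> a (b i) = i"
  shows "Pm n a \<cdot> Pm n b = idN n"
proof
  fix x
  show "(Pm n a \<cdot> Pm n b) x = idN n x"
  proof (cases "x \<in> pts n")
    case True
    have len: "length x = n" using True unfolding pts_def by auto
    have "map (\<lambda>i. map (\<lambda>j. x ! a j) [0..<n] ! b i) [0..<n] = x"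
      using assms len by (intro nth_equalityI) auto
    thus ?thesis using True Pm_pts[of n a x] assms
      by (simp add: pcomp_def Pm_def idN_def map_comp_def)
  next
    case False
    thus ?thesis by (simp add: pcomp_def Pm_def idN_def map_comp_def)
  qed
qed

lemma comp_idN_inj:
  assumes "s \<cdot> t = idN n" "x \<in> pts n" "y \<in> pts n" "s x = s y"
  shows "x = y"
proof -
  have "(s \<cdot> t) x = (s \<cdot> t) y" using assms(4) by (simp add: pcomp_def map_comp_def)
  thus ?thesis using assms(1-3) by (simp add: idN_def)
qed

lemma comp_idN_dom:
  assumes "s \<cdot> t = idN n" "x \<in> pts n"
  shows "x \<in> dom s"
proof -
  have "(t \<circ>\<^sub>m s) x = Some x" using assms by (simp add: pcomp_def idN_def)
  thus ?thesis by (auto simp: map_comp_def split: option.splits)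
qed

lemma comp_idN_ran:
  assumes "t \<cdot> s = idN n" "x \<in> pts n"
  shows "x \<in> ran s"
proof -
  have "(s \<circ>\<^sub>m t) x = Some x" using assms by (simp add: pcomp_def idN_def)
  thus ?thesis by (auto simp: map_comp_def ran_def split: option.splits)
qed

lemma Pm_INinf:
  assumes H: "\<forall>i<n. a i < n \<and> b i < n \<and> a (b i) = i \<and> b (a i) = i"
  shows "Pm n a \<in> INinf n"
proof -
  have c1: "Pm n a \<cdot> Pm n b = idN n" using H by (intro Pm_comp) auto
  have c2: "Pm n b \<cdot> Pm n a = idN n" using H by (intro Pm_comp) auto
  have ha: "\<forall>j<n. a j < n" using H by auto
  have dom: "dom (Pm n a) = pts n" by (auto simp: Pm_def split: if_splits)
  have ransub: "ran (Pm n a) \<subseteq> pts n" using Pm_pts[OF ha] by (auto simp: Pm_def ran_def split: if_splits)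
  have ransup: "pts n \<subseteq> ran (Pm n a)" using comp_idN_ran[OF c2] by auto
  have inj: "inj_on (Pm n a) (dom (Pm n a))"
    using comp_idN_inj[OF c1] dom by (auto simp: inj_on_def)
  have bij: "bij_betw a {..<n} {..<n}"
    by (rule bij_betw_byWitness[where f'=b]) (use H in auto)
  have iso: "edist (the (Pm n a x)) (the (Pm n a y)) = edist x y" if "x \<in> pts n" "y \<in> pts n" for x y
  proof -
    have lx: "length x = n" using that unfolding pts_def by auto
    have "sqd (map (\<lambda>j. x ! a j) [0..<n]) (map (\<lambda>j. y ! a j) [0..<n])
        = (\<Sum>j<n. (real (x ! a j) - real (y ! a j))\<^sup>2)"
      unfolding sqd_def by (simp add: lessThan_atLeast0)
    also have "\<dots> = (\<Sum>i<n. (real (x ! i) - real (y ! i))\<^sup>2)"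
      using sum.reindex_bij_betw[OF bij, of "\<lambda>i. (real (x ! i) - real (y ! i))\<^sup>2"] by simp
    also have "\<dots> = sqd x y" unfolding sqd_def using lx by simp
    finally show ?thesis using that by (simp add: Pm_def edist_eq_iff)
  qed
  show ?thesis unfolding INinf_def partial_isometry_def
    using dom ransub ransup inj iso by auto
qed

lemma Pm_units:
  assumes H: "\<forall>i<n. a i < n \<and> b i < n \<and> a (b i) = i \<and> b (a i) = i"
  shows "Pm n a \<in> unitsN n"
proof -
  have H': "\<forall>i<n. b i < n \<and> a i < n \<and> b (a i) = i \<and> a (b i) = i" using H by blast
  have "Pm n b \<in> INinf n" by (rule Pm_INinf[OF H'])
  moreover have "Pm n a \<cdot> Pm n b = idN n" by (rule Pm_comp) (use H in blast)
  moreover have "Pm n b \<cdot> Pm n a = idN n" by (rule Pm_comp) (use H in blast)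
  ultimately show ?thesis using Pm_INinf[OF H] unfolding unitsN_def by blast
qed

lemma Rs_idem:
  assumes "A \<subseteq> pts n" "finite (pts n - A)"
  shows "Rs A \<in> idemN n"
proof -
  have d: "dom (Rs A) = A" and r: "ran (Rs A) = A" by (auto simp: Rs_def ran_def split: if_splits)
  have "inj_on (Rs A) (dom (Rs A))" by (auto simp: inj_on_def Rs_def split: if_splits)
  moreover have "Rs A \<cdot> Rs A = Rs A" unfolding pcomp_def Rs_def map_comp_def by (rule ext) simp
  moreover have "\<forall>x\<in>dom (Rs A). \<forall>y\<in>dom (Rs A). edist (the (Rs A x)) (the (Rs A y)) = edist x y"
    by (auto simp: Rs_def)
  ultimately show ?thesis using assms unfolding idemN_def INinf_def partial_isometry_def mem_Collect_eq d r by simp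
qed

lemma idem_fix:
  assumes "e \<in> idemN n" "e y = Some z"
  shows "z = y"
proof -
  have "(e \<circ>\<^sub>m e) y = Some z" using assms unfolding idemN_def pcomp_def by auto
  hence ez: "e z = Some z" using assms(2) by simp
  have "inj_on e (dom e)" using assms(1) unfolding idemN_def INinf_def partial_isometry_def by auto
  thus ?thesis using ez assms(2) unfolding inj_on_def by (metis domI)
qed

lemma iso_sqd:
  assumes "partial_isometry n b" "b x = Some x'" "b y = Some y'"
  shows "sqd x' y' = sqd x y"
proof -
  have "x \<in> dom b" "y \<in> dom b" using assms by auto
  hence "edist (the (b x)) (the (b y)) = edist x y" using assms(1) unfolding partial_isometry_def by blast
  thus ?thesis using assms by (simp add: edist_eq_iff)
qed

lemma iso_pts:
  assumes "partial_isometry n b" "b x = Some x'"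
  shows "x' \<in> pts n" "x \<in> pts n"
  using assms unfolding partial_isometry_def by (auto simp: ran_def)

lemma pts_len: "x \<in> pts n \<Longrightarrow> length x = n"
  unfolding pts_def by auto

lemma formula:
  assumes iso: "partial_isometry n b"
    and bq: "b q = Some w"
    and bu: "\<forall>i<n. b (q[i := Suc (q!i)]) = Some (u i)"
    and H: "\<forall>i<n. \<pi> i < n \<and> (s i = 1 \<or> s i = -1) \<and> real (u i ! \<pi> i) = real (w ! \<pi> i) + s i
             \<and> (\<forall>l<n. l \<noteq> \<pi> i \<longrightarrow> u i ! l = w ! l)"
    and bx: "b x = Some z" and i: "i < n"
  shows "real (z ! \<pi> i) = real (w ! \<pi> i) + s i * (real (x ! i) - real (q ! i))"
proof -
  have bui: "b (q[i := Suc (q!i)]) = Some (u i)" using bu i by auto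
  have lz: "length z = n" and lx: "length x = n" using iso_pts[OF iso bx] pts_len by auto
  have lw: "length w = n" and lq: "length q = n" using iso_pts[OF iso bq] pts_len by auto
  have lu: "length (u i) = n" using iso_pts[OF iso bui] pts_len by auto
  have Hi: "\<pi> i < n" "s i = 1 \<or> s i = -1" "real (u i ! \<pi> i) = real (w ! \<pi> i) + s i"
     "\<forall>l<n. l \<noteq> \<pi> i \<longrightarrow> u i ! l = w ! l" using H i by auto
  have e1: "sqd z (u i) = sqd x (q[i := Suc (q!i)])" using iso_sqd[OF iso bx bui] .
  have e2: "sqd z w = sqd x q" using iso_sqd[OF iso bx bq] .
  have e3: "sqd x (q[i := Suc (q!i)]) = sqd x q - 2 * 1 * (real (x ! i) - real (q ! i)) + 1\<^sup>2"
    by (rule sqd_shift) (use lx lq i in auto)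
  have e4: "sqd z (u i) = sqd z w - 2 * s i * (real (z ! \<pi> i) - real (w ! \<pi> i)) + (s i)\<^sup>2"
    by (rule sqd_shift) (use lz lw lu Hi in auto)
  from Hi(2) show ?thesis
  proof
    assume "s i = 1" thus ?thesis using e1 e2 e3 e4 by simp
  next
    assume "s i = -1" thus ?thesis using e1 e2 e3 e4 by simp
  qed
qed

lemma extend:
  assumes n2: "n \<ge> 2" and a: "\<alpha> \<in> INinf n"
  shows "\<exists>\<sigma>. \<sigma> \<in> unitsN n \<and> (\<forall>x\<in>dom \<alpha>. \<sigma> x = \<alpha> x) \<and>
           (\<forall>\<sigma>'. \<sigma>' \<in> unitsN n \<and> (\<forall>x\<in>dom \<alpha>. \<sigma>' x = \<alpha> x) \<longrightarrow> \<sigma>' = \<sigma>)"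
proof -
  have iso: "partial_isometry n \<alpha>" and fd: "finite (pts n - dom \<alpha>)" and fr: "finite (pts n - ran \<alpha>)"
    using a unfolding INinf_def by auto
  let ?B = "(pts n - dom \<alpha>) \<union> (pts n - ran \<alpha>)"
  have "finite (\<Union> (set ` ?B))" using fd fr by auto
  then obtain m where m: "\<forall>v\<in>\<Union> (set ` ?B). v < m" using finite_nat_set_iff_bounded by blast
  define M where "M = Suc m"
  have M1: "M \<ge> 1" unfolding M_def by simp
  have big: "x \<in> dom \<alpha> \<and> x \<in> ran \<alpha>" if "x \<in> pts n" "j < n" "x ! j \<ge> M" for x j
  proof (rule ccontr)
    assume "\<not> (x \<in> dom \<alpha> \<and> x \<in> ran \<alpha>)"
    hence "x \<in> ?B" using that by auto
    moreover have "x ! j \<in> set x" using that pts_len[OF that(1)] by auto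
    ultimately have "x ! j < m" using m by blast
    thus False using that(3) unfolding M_def by simp
  qed
  have n0: "0 < n" using n2 by simp
  define q where "q = replicate n M"
  have qp: "q \<in> pts n" unfolding q_def pts_def using M1 by auto
  have lq: "length q = n" unfolding q_def by simp
  have qd: "q \<in> dom \<alpha>" using big[OF qp n0] unfolding q_def using n0 by simp
  then obtain w where aq: "\<alpha> q = Some w" by auto
  have lw: "length w = n" using iso_pts[OF iso aq] pts_len by auto
  have bp: "q[i := Suc (q!i)] \<in> pts n" if "i < n" for i
    using qp set_update_subset_insert[of q i "Suc (q!i)"] unfolding pts_def by auto
  have bd: "q[i := Suc (q!i)] \<in> dom \<alpha>" if "i < n" for i
    using big[OF bp[OF that] that] that lq unfolding q_def by simp
  define u where "u i = the (\<alpha> (q[i := Suc (q!i)]))" for i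
  have bu: "\<forall>i<n. \<alpha> (q[i := Suc (q!i)]) = Some (u i)" using bd unfolding u_def by (metis domIff option.collapse)
  have lu: "length (u i) = n" if "i < n" for i using iso_pts[OF iso] bu that pts_len by blast
  have sqb: "sqd (q[i := Suc (q!i)]) q = 1" if "i < n" for i
  proof -
    have "sqd q (q[i := Suc (q!i)]) = sqd q q - 2 * 1 * (real (q ! i) - real (q ! i)) + 1\<^sup>2"
      by (rule sqd_shift) (use lq that in auto)
    thus ?thesis using sqd_sym[of q "q[i := Suc (q!i)]"] lq by (simp add: sqd_self)
  qed
  have uw: "sqd (u i) w = 1" if "i < n" for i
    using iso_sqd[OF iso _ aq, of "q[i := Suc (q!i)]" "u i"] bu that sqb[OF that] by simp
  have "\<forall>i. \<exists>j s. i < n \<longrightarrow> (j < n \<and> (s = 1 \<or> s = (-1::real)) \<and> real (u i ! j) = real (w ! j) + s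
             \<and> (\<forall>l<n. l \<noteq> j \<longrightarrow> u i ! l = w ! l))"
    using sqd1[OF lu lw uw] by blast
  then obtain \<pi> s where H0: "\<forall>i. i < n \<longrightarrow> (\<pi> i < n \<and> (s i = 1 \<or> s i = (-1::real)) \<and> real (u i ! \<pi> i) = real (w ! \<pi> i) + s i
             \<and> (\<forall>l<n. l \<noteq> \<pi> i \<longrightarrow> u i ! l = w ! l))" by metis
  have H: "\<forall>i<n. \<pi> i < n \<and> (s i = 1 \<or> s i = -1) \<and> real (u i ! \<pi> i) = real (w ! \<pi> i) + s i
             \<and> (\<forall>l<n. l \<noteq> \<pi> i \<longrightarrow> u i ! l = w ! l)" using H0 by blast
  have inj: "inj_on \<pi> {..<n}"
  proof (rule inj_onI, rule ccontr)
    fix i k assume ik: "i \<in> {..<n}" "k \<in> {..<n}" "\<pi> i = \<pi> k" "i \<noteq> k"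
    have Hi: "\<pi> i < n" "s i = 1 \<or> s i = -1" "real (u i ! \<pi> i) = real (w ! \<pi> i) + s i"
      using H ik by auto
    have Hk: "\<pi> k < n" "s k = 1 \<or> s k = -1" "real (u k ! \<pi> k) = real (w ! \<pi> k) + s k"
     "\<forall>l<n. l \<noteq> \<pi> k \<longrightarrow> u k ! l = w ! l" using H ik by auto
    have b2: "sqd (q[i := Suc (q!i)]) (q[k := Suc (q!k)]) = sqd (q[i := Suc (q!i)]) q - 2 * 1 * (real (q[i := Suc (q!i)] ! k) - real (q ! k)) + 1\<^sup>2"
      by (rule sqd_shift) (use lq ik in auto)
    hence b2': "sqd (q[i := Suc (q!i)]) (q[k := Suc (q!k)]) = 2" using sqb ik by simp
    have u2: "sqd (u i) (u k) = 2" using iso_sqd[OF iso, of "q[i := Suc (q!i)]" "u i" "q[k := Suc (q!k)]" "u k"] bu ik b2' by simp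
    have "sqd (u i) (u k) = sqd (u i) w - 2 * s k * (real (u i ! \<pi> k) - real (w ! \<pi> k)) + (s k)\<^sup>2"
      by (rule sqd_shift) (use lu lw ik Hk in auto)
    hence "2 = 1 - 2 * s k * s i + (s k)\<^sup>2" using u2 uw ik Hi(3) ik(3) by simp
    thus False using Hi(2) Hk(2) by auto
  qed
  have pimg: "\<pi> ` {..<n} = {..<n}" by (rule endo_inj_surj) (use H inj in auto)
  define \<rho> where "\<rho> = inv_into {..<n} \<pi>"
  have rho: "\<rho> j < n" "\<pi> (\<rho> j) = j" if "j < n" for j
  proof -
    have "j \<in> \<pi> ` {..<n}" using pimg that by simp
    have "\<rho> j \<in> {..<n}" unfolding \<rho>_def using \<open>j \<in> \<pi> ` {..<n}\<close> by (rule inv_into_into)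
    thus "\<rho> j < n" by simp
    show "\<pi> (\<rho> j) = j" unfolding \<rho>_def using \<open>j \<in> \<pi> ` {..<n}\<close> by (rule f_inv_into_f)
  qed
  have rho2: "\<rho> (\<pi> i) = i" if "i < n" for i unfolding \<rho>_def using inj that by (simp add: inv_into_f_f)
  have F: "real (z ! \<pi> i) = real (w ! \<pi> i) + s i * (real (x ! i) - real (q ! i))"
    if "\<alpha> x = Some z" "i < n" for x z i
    by (rule formula[OF iso aq bu H that])
  have sgn: "s i = 1" if i: "i < n" for i
  proof (rule ccontr)
    assume "s i \<noteq> 1"
    hence si: "s i = -1" using H i by auto
    define T where "T = M + w ! \<pi> i + q ! i + 1"
    have xp: "replicate n T \<in> pts n" unfolding pts_def T_def by auto
    have "replicate n T \<in> dom \<alpha>" using big[OF xp n0] n0 unfolding T_def by simp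
    then obtain z where az: "\<alpha> (replicate n T) = Some z" by auto
    have "real (z ! \<pi> i) = real (w ! \<pi> i) + s i * (real T - real (q ! i))" using F[OF az i] i by simp
    hence "real (z ! \<pi> i) < 0" using si unfolding T_def by simp
    thus False by simp
  qed
  have off: "w ! \<pi> i = q ! i" if i: "i < n" for i
  proof (rule ccontr)
    assume ne: "w ! \<pi> i \<noteq> q ! i"
    have pi: "\<pi> i < n" using H i by auto
    show False
    proof (cases "w ! \<pi> i < q ! i")
      case True
      define k where "k = (if i = 0 then 1 else (0::nat))"
      have k: "k < n" "k \<noteq> i" unfolding k_def using n2 by auto
      define x where "x = (replicate n M)[i := 1]"
      have xp: "x \<in> pts n" unfolding x_def pts_def using M1
        by (auto dest!: subsetD[OF set_update_subset_insert])
      have "x \<in> dom \<alpha>" using big[OF xp k(1)] k unfolding x_def by simp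
      then obtain z where az: "\<alpha> x = Some z" by auto
      have "z ! \<pi> i \<ge> 1" using pts_nth[OF iso_pts(1)[OF iso az] pi] .
      moreover have "real (z ! \<pi> i) = real (w ! \<pi> i) + (1 - real (q ! i))"
        using F[OF az i] sgn[OF i] i unfolding x_def by simp
      ultimately show False using True by simp
    next
      case False
      hence gt: "w ! \<pi> i > q ! i" using ne by simp
      define k where "k = (if \<pi> i = 0 then 1 else (0::nat))"
      have k: "k < n" "k \<noteq> \<pi> i" unfolding k_def using n2 by auto
      define y where "y = (replicate n M)[\<pi> i := 1]"
      have yp: "y \<in> pts n" unfolding y_def pts_def using M1
        by (auto dest!: subsetD[OF set_update_subset_insert])
      have "y \<in> ran \<alpha>" using big[OF yp k(1)] k unfolding y_def by simp
      then obtain x where ax: "\<alpha> x = Some y" by (auto simp: ran_def)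
      have "x ! i \<ge> 1" using pts_nth[OF iso_pts(2)[OF iso ax] i] .
      moreover have "real (y ! \<pi> i) = real (w ! \<pi> i) + (real (x ! i) - real (q ! i))"
        using F[OF ax i] sgn[OF i] by simp
      moreover have "y ! \<pi> i = 1" unfolding y_def using pi by simp
      ultimately show False using gt by simp
    qed
  qed
  have Fix: "z ! \<pi> i = x ! i" if "\<alpha> x = Some z" "i < n" for x z i
    using F[OF that] sgn[OF that(2)] off[OF that(2)] by simp
  define \<sigma> where "\<sigma> = Pm n \<rho>"
  have HH: "\<forall>i<n. \<rho> i < n \<and> \<pi> i < n \<and> \<rho> (\<pi> i) = i \<and> \<pi> (\<rho> i) = i"
    using rho rho2 H by blast
  have su: "\<sigma> \<in> unitsN n" unfolding \<sigma>_def by (rule Pm_units[OF HH])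
  have agree: "\<sigma> x = \<alpha> x" if xd: "x \<in> dom \<alpha>" for x
  proof -
    obtain z where az: "\<alpha> x = Some z" using xd by auto
    have xp: "x \<in> pts n" using iso_pts(2)[OF iso az] .
    have lz: "length z = n" using iso_pts(1)[OF iso az] pts_len by auto
    have "z = map (\<lambda>j. x ! \<rho> j) [0..<n]"
    proof (rule nth_equalityI)
      show "length z = length (map (\<lambda>j. x ! \<rho> j) [0..<n])" using lz by simp
      fix j assume "j < length z"
      hence j: "j < n" using lz by simp
      have "z ! j = z ! \<pi> (\<rho> j)" using rho[OF j] by simp
      also have "\<dots> = x ! \<rho> j" using Fix[OF az rho(1)[OF j]] .
      finally show "z ! j = map (\<lambda>j. x ! \<rho> j) [0..<n] ! j" using j by simp
    qed
    thus ?thesis using az xp unfolding \<sigma>_def Pm_def by simp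
  qed
  have uniq: "\<sigma>' = \<sigma>" if s': "\<sigma>' \<in> unitsN n" "\<forall>x\<in>dom \<alpha>. \<sigma>' x = \<alpha> x" for \<sigma>'
  proof
    fix x
    obtain \<tau> where tau: "\<sigma>' \<cdot> \<tau> = idN n" using s'(1) unfolding unitsN_def by auto
    have iso': "partial_isometry n \<sigma>'" using s'(1) unfolding unitsN_def INinf_def by auto
    have sq': "\<sigma>' q = Some w" using s'(2) qd aq by auto
    have su': "\<forall>i<n. \<sigma>' (q[i := Suc (q!i)]) = Some (u i)" using s'(2) bd bu by auto
    show "\<sigma>' x = \<sigma> x"
    proof (cases "x \<in> pts n")
      case True
      then obtain z where sz: "\<sigma>' x = Some z" using comp_idN_dom[OF tau] by auto
      have lz: "length z = n" using iso_pts(1)[OF iso' sz] pts_len by auto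
      have "z = map (\<lambda>j. x ! \<rho> j) [0..<n]"
      proof (rule nth_equalityI)
        show "length z = length (map (\<lambda>j. x ! \<rho> j) [0..<n])" using lz by simp
        fix j assume "j < length z"
        hence j: "j < n" using lz by simp
        have "real (z ! \<pi> (\<rho> j)) = real (w ! \<pi> (\<rho> j)) + s (\<rho> j) * (real (x ! \<rho> j) - real (q ! \<rho> j))"
          by (rule formula[OF iso' sq' su' H sz rho(1)[OF j]])
        hence "z ! \<pi> (\<rho> j) = x ! \<rho> j" using sgn[OF rho(1)[OF j]] off[OF rho(1)[OF j]] by simp
        thus "z ! j = map (\<lambda>j. x ! \<rho> j) [0..<n] ! j" using j rho[OF j] by simp
      qed
      thus ?thesis using sz True unfolding \<sigma>_def Pm_def by simp
    next
      case False
      have "x \<notin> dom \<sigma>'" using False iso' unfolding partial_isometry_def by auto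
      thus ?thesis using False unfolding \<sigma>_def Pm_def by auto
    qed
  qed
  show ?thesis using su agree uniq by blast
qed

theorem lemma3p5:
  fixes n :: nat and \<alpha> :: "nat list \<rightharpoonup> nat list"
  assumes "n \<ge> 2" and "\<alpha> \<in> INinf n"
  shows "\<exists>\<sigma> el er. \<sigma> \<in> unitsN n \<and> el \<in> idemN n \<and> er \<in> idemN n \<and>
           \<alpha> = \<sigma> \<cdot> el \<and> \<alpha> = er \<cdot> \<sigma> \<and>
           (\<forall>\<sigma>' el'. \<sigma>' \<in> unitsN n \<and> el' \<in> idemN n \<and> \<alpha> = \<sigma>' \<cdot> el' \<longrightarrow> \<sigma>' = \<sigma> \<and> el' = el) \<and>
           (\<forall>\<sigma>' er'. \<sigma>' \<in> unitsN n \<and> er' \<in> idemN n \<and> \<alpha> = er' \<cdot> \<sigma>' \<longrightarrow> \<sigma>' = \<sigma> \<and> er' = er)"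
proof -
  obtain \<sigma> where su: "\<sigma> \<in> unitsN n" and agree: "\<forall>x\<in>dom \<alpha>. \<sigma> x = \<alpha> x"
    and uniq: "\<And>\<sigma>'. \<sigma>' \<in> unitsN n \<Longrightarrow> \<forall>x\<in>dom \<alpha>. \<sigma>' x = \<alpha> x \<Longrightarrow> \<sigma>' = \<sigma>"
    using extend[OF assms] by blast
  have iso: "partial_isometry n \<alpha>" and fd: "finite (pts n - dom \<alpha>)" and fr: "finite (pts n - ran \<alpha>)"
    using assms(2) unfolding INinf_def by auto
  have dsub: "dom \<alpha> \<subseteq> pts n" and rsub: "ran \<alpha> \<subseteq> pts n" using iso unfolding partial_isometry_def by auto
  obtain \<tau> where t1: "\<sigma> \<cdot> \<tau> = idN n" using su unfolding unitsN_def by auto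
  have sI: "\<sigma> \<in> INinf n" using su unfolding unitsN_def by auto
  have sdom: "\<sigma> x = None" if "x \<notin> pts n" for x
    using sI that unfolding INinf_def partial_isometry_def by auto
  define el where "el = Rs (ran \<alpha>)"
  define er where "er = Rs (dom \<alpha>)"
  have eli: "el \<in> idemN n" unfolding el_def by (rule Rs_idem[OF rsub fr])
  have eri: "er \<in> idemN n" unfolding er_def by (rule Rs_idem[OF dsub fd])
  have L: "\<alpha> = \<sigma> \<cdot> el"
  proof
    fix x
    show "\<alpha> x = (\<sigma> \<cdot> el) x"
    proof (cases "x \<in> dom \<alpha>")
      case True
      then obtain y where ax: "\<alpha> x = Some y" by auto
      hence "y \<in> ran \<alpha>" by (auto simp: ran_def)
      thus ?thesis using ax agree True by (simp add: pcomp_def el_def Rs_def)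
    next
      case False
      hence ax: "\<alpha> x = None" by auto
      show ?thesis
      proof (cases "x \<in> pts n")
        case True
        then obtain y where sx: "\<sigma> x = Some y" using comp_idN_dom[OF t1] by auto
        have "y \<notin> ran \<alpha>"
        proof
          assume "y \<in> ran \<alpha>"
          then obtain x' where ax': "\<alpha> x' = Some y" by (auto simp: ran_def)
          hence x'd: "x' \<in> dom \<alpha>" by auto
          hence "\<sigma> x' = \<sigma> x" using agree ax' sx by auto
          hence "x' = x" using comp_idN_inj[OF t1] x'd dsub True by blast
          thus False using x'd False by simp
        qed
        thus ?thesis using ax sx by (simp add: pcomp_def el_def Rs_def)
      next
        case False
        thus ?thesis using ax sdom by (simp add: pcomp_def)
      qed
    qed
  qed
  have R: "\<alpha> = er \<cdot> \<sigma>"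
  proof
    fix x
    show "\<alpha> x = (er \<cdot> \<sigma>) x"
      using agree by (cases "x \<in> dom \<alpha>") (auto simp: pcomp_def er_def Rs_def)
  qed
  have UL: "\<sigma>' = \<sigma> \<and> el' = el" if h: "\<sigma>' \<in> unitsN n" "el' \<in> idemN n" "\<alpha> = \<sigma>' \<cdot> el'" for \<sigma>' el'
  proof -
    obtain \<tau>' where t': "\<tau>' \<cdot> \<sigma>' = idN n" using h(1) unfolding unitsN_def by auto
    have ag: "\<forall>x\<in>dom \<alpha>. \<sigma>' x = \<alpha> x"
    proof
      fix x assume "x \<in> dom \<alpha>"
      then obtain z where ax: "\<alpha> x = Some z" by auto
      hence "(el' \<circ>\<^sub>m \<sigma>') x = Some z" using h(3) by (simp add: pcomp_def)
      then obtain y where sy: "\<sigma>' x = Some y" and ey: "el' y = Some z"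
        by (auto simp: map_comp_def split: option.splits)
      have "z = y" using idem_fix[OF h(2) ey] .
      thus "\<sigma>' x = \<alpha> x" using sy ax by simp
    qed
    have eq: "\<sigma>' = \<sigma>" using uniq[OF h(1) ag] .
    have "el' = el"
    proof
      fix y
      show "el' y = el y"
      proof (cases "el' y")
        case None
        have "y \<notin> ran \<alpha>"
        proof
          assume "y \<in> ran \<alpha>"
          then obtain x where ax: "\<alpha> x = Some y" by (auto simp: ran_def)
          hence "\<sigma> x = Some y" using agree by force
          hence "\<alpha> x = el' y" using h(3) eq by (simp add: pcomp_def)
          thus False using ax None by simp
        qed
        thus ?thesis using None by (simp add: el_def Rs_def)
      next
        case (Some z)
        have zy: "z = y" using idem_fix[OF h(2) Some] .
        have "y \<in> pts n" using h(2) Some unfolding idemN_def INinf_def partial_isometry_def by auto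
        then obtain x where sx: "\<sigma>' x = Some y" using comp_idN_ran[OF t'] by (auto simp: ran_def)
        hence "\<alpha> x = Some y" using h(3) Some zy by (simp add: pcomp_def)
        hence "y \<in> ran \<alpha>" by (auto simp: ran_def)
        thus ?thesis using Some zy by (simp add: el_def Rs_def)
      qed
    qed
    thus ?thesis using eq by simp
  qed
  have UR: "\<sigma>' = \<sigma> \<and> er' = er" if h: "\<sigma>' \<in> unitsN n" "er' \<in> idemN n" "\<alpha> = er' \<cdot> \<sigma>'" for \<sigma>' er'
  proof -
    obtain \<tau>' where t': "\<sigma>' \<cdot> \<tau>' = idN n" using h(1) unfolding unitsN_def by auto
    have ag: "\<forall>x\<in>dom \<alpha>. \<sigma>' x = \<alpha> x"
    proof
      fix x assume "x \<in> dom \<alpha>"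
      then obtain z where ax: "\<alpha> x = Some z" by auto
      hence "(\<sigma>' \<circ>\<^sub>m er') x = Some z" using h(3) by (simp add: pcomp_def)
      then obtain y where ey: "er' x = Some y" and sy: "\<sigma>' y = Some z"
        by (auto simp: map_comp_def split: option.splits)
      have "y = x" using idem_fix[OF h(2) ey] .
      thus "\<sigma>' x = \<alpha> x" using sy ax by simp
    qed
    have eq: "\<sigma>' = \<sigma>" using uniq[OF h(1) ag] .
    have "er' = er"
    proof
      fix x
      show "er' x = er x"
      proof (cases "er' x")
        case None
        hence "\<alpha> x = None" using h(3) by (simp add: pcomp_def)
        thus ?thesis using None by (auto simp: er_def Rs_def)
      next
        case (Some y)
        have yx: "y = x" using idem_fix[OF h(2) Some] .
        have "x \<in> pts n" using h(2) Some unfolding idemN_def INinf_def partial_isometry_def by auto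
        then obtain z where sx: "\<sigma>' x = Some z" using comp_idN_dom[OF t'] by auto
        hence "\<alpha> x = Some z" using h(3) Some yx by (simp add: pcomp_def)
        hence "x \<in> dom \<alpha>" by auto
        thus ?thesis using Some yx by (simp add: er_def Rs_def)
      qed
    qed
    thus ?thesis using eq by simp
  qed
  show ?thesis using su eli eri L R UL UR by blast
qed

end
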